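(* Let $\mathbb{K}\in\{\mathbb{R},\mathbb{C}\}$, let $g\in\mathsf{GL}_d(\mathbb{K})$ and write $g=k_g\exp(\mu(g))k_g'$ with $k_g,k_g'\in\mathsf{K}_d$. Let $x\in\mathbb{P}(\mathbb{K}^d)$ and suppose $0<\delta,r<1$ satisfy $gB_\delta(x)\subset B_r(gx)$. Then \[\frac{\sigma_1}{\sigma_2}(g)\ge\frac{\delta}{4r}\,\mathrm{dist}\big(x,\mathbb{P}((k_g')^{-1}e_1^\perp)\big).\]
   Context: $\mathbb{K}^d$ has the standard (Hermitian) inner product and standard basis $e_1,\dots,e_d$; $\mathsf{K}_d$ is $\mathsf{O}(d)$ or $\mathsf{U}(d)$. $\sigma_1(g)\ge\dots\ge\sigma_d(g)$ are the singular values, $\mu(g)=\mathrm{diag}(\log\sigma_1(g),\dots,\log\sigma_d(g))$, so $g=k_g\exp(\mu(g))k_g'$ is a Cartan (KAK) decomposition. The metric on $\mathbb{P}(\mathbb{K}^d)$ is $d_{\mathbb{P}}([u],[v])=\sqrt{1-\frac{|\langle u,v\rangle|^2}{\|u\|^2\|v\|^2}}$, $B_\delta(x)$ is the open $d_{\mathbb{P}}$-ball, and for subsets $X,Y\subset\mathbb{P}(\mathbb{K}^d)$, $\mathrm{dist}(X,Y)$ is the minimal $d_{\mathbb{P}}$-distance between them. For a unit vector $v$, $v^\perp$ is its orthogonal complement. *)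

theory Defs
  imports "HOL-Analysis.Analysis" "Jordan_Normal_Form.Schur_Decomposition"
begin

(* K^d is modelled by 'a vec with carrier_vec d, for 'a = real or 'a = complex.
   The standard Hermitian inner product <u,v> is  u \<bullet>c v  (= sum u_i * conj v_i). *)

definition unitary_mat :: "nat \<Rightarrow> 'a::conjugatable_field mat \<Rightarrow> bool" where
  "unitary_mat d k \<longleftrightarrow> k \<in> carrier_mat d d \<and> mat_adjoint k * k = 1\<^sub>m d"

definition diag_real :: "nat \<Rightarrow> (nat \<Rightarrow> real) \<Rightarrow> 'a::real_normed_field mat" where
  "diag_real d s = mat d d (\<lambda>(i,j). if i = j then of_real (s i) else 0)"

definition dP :: "'a::{conjugatable_field, real_normed_field} vec \<Rightarrow> 'a vec \<Rightarrow> real" where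
  "dP u v = sqrt (1 - (norm (u \<bullet>c v))\<^sup>2 / (norm (u \<bullet>c u) * norm (v \<bullet>c v)))"

text \<open>Nonzero representatives of points of P(K^d).\<close>
definition proj_reps :: "nat \<Rightarrow> 'a::zero vec set" where
  "proj_reps d = {u. u \<in> carrier_vec d \<and> u \<noteq> 0\<^sub>v d}"

definition proj_ball :: "nat \<Rightarrow> 'a::{conjugatable_field, real_normed_field} vec \<Rightarrow> real \<Rightarrow> 'a vec set" where
  "proj_ball d x \<delta> = {y \<in> proj_reps d. dP x y < \<delta>}"

text \<open>Nonzero representatives of P((k')^{-1} e_1^perp), i.e. of the hyperplane
  {w. <k' w, e_1> = 0} (e_1 = unit_vec d 0).\<close>
definition hyperplane_reps :: "nat \<Rightarrow> 'a::{conjugatable_field, real_normed_field} mat \<Rightarrow> 'a vec set" where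
  "hyperplane_reps d k' = {w \<in> proj_reps d. (k' *\<^sub>v w) \<bullet>c unit_vec d 0 = 0}"

definition dist_to_set :: "'a::{conjugatable_field, real_normed_field} vec \<Rightarrow> 'a vec set \<Rightarrow> real" where
  "dist_to_set x W = Inf (dP x ` W)"

end

theory Submission
  imports Defs
begin

class hermit = conjugatable_field + real_normed_field +
  assumes mult_conj_norm0: "(z::'a) * conjugate z = (norm z)^2 *\<^sub>R 1"
  and conj_of_real0: "conjugate (x *\<^sub>R (1::'a)) = x *\<^sub>R 1"

instance real :: hermit
proof
  fix z x :: real
  show "z * conjugate z = (norm z)^2 *\<^sub>R 1" by (simp add: power2_eq_square)
  show "conjugate (x *\<^sub>R (1::real)) = x *\<^sub>R 1" by simp
qed

instance complex :: hermit
proof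
  fix z :: complex and x :: real
  show "z * conjugate z = (norm z)^2 *\<^sub>R 1"
    unfolding scaleR_conv_of_real mult.right_neutral conjugate_complex_def
    by (rule complex_norm_square[symmetric])
  show "conjugate (x *\<^sub>R (1::complex)) = x *\<^sub>R 1" by (simp add: scaleR_conv_of_real)
qed

lemma mult_conj_norm: "(z::'a::hermit) * conjugate z = of_real ((norm z)^2)"
  by (simp add: mult_conj_norm0 of_real_def)
lemma conj_of_real: "conjugate (of_real x :: 'a::hermit) = of_real x"
  by (simp add: conj_of_real0 of_real_def)

lemma cprod_sum: "u \<in> carrier_vec d \<Longrightarrow> v \<in> carrier_vec d \<Longrightarrow>
   u \<bullet>c v = (\<Sum>i<d. u$i * conjugate (v$i))"
  by (auto simp: scalar_prod_def lessThan_atLeast0)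

definition nsq :: "'a::real_normed_field vec \<Rightarrow> real" where
  "nsq v = (\<Sum>i<dim_vec v. (norm (v$i))^2)"

lemma nsq_nonneg: "0 \<le> nsq v" unfolding nsq_def by (simp add: sum_nonneg)

lemma cprod_self: "(u::'a::hermit vec) \<bullet>c u = of_real (nsq u)"
  by (simp add: scalar_prod_def nsq_def lessThan_atLeast0 mult_conj_norm)

lemma norm_cprod_self: "norm ((u::'a::hermit vec) \<bullet>c u) = nsq u"
  using nsq_nonneg[of u] by (simp add: cprod_self)

lemma conj_cprod: "u \<in> carrier_vec d \<Longrightarrow> v \<in> carrier_vec d \<Longrightarrow>
   conjugate ((u::'a::hermit vec) \<bullet>c v) = v \<bullet>c u"
  by (simp add: cprod_sum sum_conjugate conjugate_dist_mul mult.commute)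

lemma norm_sq_of: "(of_real ((norm (z::'a::hermit))^2) :: 'a) = z * conjugate z"
  by (simp add: mult_conj_norm)





lemma gram:
  fixes u w :: "'a::hermit vec"
  assumes u: "u \<in> carrier_vec d" and w: "w \<in> carrier_vec d"
  shows "nsq u * nsq (w + a \<cdot>\<^sub>v u) - (norm (u \<bullet>c (w + a \<cdot>\<^sub>v u)))^2
       = nsq u * nsq w - (norm (u \<bullet>c w))^2"
proof -
  define p where "p = u \<bullet>c u"
  define q where "q = u \<bullet>c w"
  define m where "m = w \<bullet>c w"
  have wa: "w + a \<cdot>\<^sub>v u \<in> carrier_vec d" using u w by simp
  have cp: "conjugate p = p" unfolding p_def cprod_self conj_of_real ..
  have cq: "conjugate q = w \<bullet>c u" unfolding q_def using conj_cprod[OF u w] .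
  have E1: "(w + a \<cdot>\<^sub>v u) \<bullet>c (w + a \<cdot>\<^sub>v u) = m + conjugate a * (w \<bullet>c u) + a * q + a * conjugate a * p"
  proof -
    have "(w + a \<cdot>\<^sub>v u) \<bullet>c (w + a \<cdot>\<^sub>v u) = (\<Sum>i<d. (w$i + a * u$i) * conjugate (w$i + a * u$i))"
      unfolding cprod_sum[OF wa wa] using u w by (intro sum.cong) auto
    also have "\<dots> = (\<Sum>i<d. w$i * conjugate (w$i) + conjugate a * (w$i * conjugate (u$i)) + a * (u$i * conjugate (w$i)) + a * conjugate a * (u$i * conjugate (u$i)))"
      by (intro sum.cong refl) (simp add: conjugate_dist_add conjugate_dist_mul distrib_left distrib_right mult_ac)
    also have "\<dots> = m + conjugate a * (w \<bullet>c u) + a * q + a * conjugate a * p"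
      unfolding m_def p_def q_def cprod_sum[OF u u] cprod_sum[OF w w] cprod_sum[OF u w] cprod_sum[OF w u]
      by (simp only: sum.distrib sum_distrib_left)
    finally show ?thesis .
  qed
  have E2: "u \<bullet>c (w + a \<cdot>\<^sub>v u) = q + conjugate a * p"
  proof -
    have "u \<bullet>c (w + a \<cdot>\<^sub>v u) = (\<Sum>i<d. u$i * conjugate (w$i + a * u$i))"
      unfolding cprod_sum[OF u wa] using u w by (intro sum.cong) auto
    also have "\<dots> = (\<Sum>i<d. u$i * conjugate (w$i) + conjugate a * (u$i * conjugate (u$i)))"
      by (intro sum.cong refl) (simp add: conjugate_dist_add conjugate_dist_mul distrib_left distrib_right mult_ac)
    also have "\<dots> = q + conjugate a * p"
      unfolding p_def q_def cprod_sum[OF u u] cprod_sum[OF u w]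
      by (simp only: sum.distrib sum_distrib_left)
    finally show ?thesis .
  qed
  have "(of_real (nsq u * nsq (w + a \<cdot>\<^sub>v u) - (norm (u \<bullet>c (w + a \<cdot>\<^sub>v u)))^2) :: 'a)
      = p * ((w + a \<cdot>\<^sub>v u) \<bullet>c (w + a \<cdot>\<^sub>v u)) - (u \<bullet>c (w + a \<cdot>\<^sub>v u)) * conjugate (u \<bullet>c (w + a \<cdot>\<^sub>v u))"
    unfolding of_real_diff of_real_mult norm_sq_of p_def cprod_self ..
  also have "\<dots> = p * m - q * conjugate q"
    unfolding E1 E2 cq[symmetric] conjugate_dist_add conjugate_dist_mul cp conjugate_id
    by (simp add: algebra_simps)
  also have "\<dots> = of_real (nsq u * nsq w - (norm (u \<bullet>c w))^2)"
    unfolding of_real_diff of_real_mult norm_sq_of p_def m_def q_def cprod_self ..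
  finally show ?thesis using of_real_eq_iff by blast
qed


lemma cprod_lin:
  fixes u w :: "'a::hermit vec"
  assumes u: "u \<in> carrier_vec d" and w: "w \<in> carrier_vec d"
  shows "u \<bullet>c (w + a \<cdot>\<^sub>v u) = u \<bullet>c w + conjugate a * (u \<bullet>c u)"
proof -
  have wa: "w + a \<cdot>\<^sub>v u \<in> carrier_vec d" using u w by simp
  have "u \<bullet>c (w + a \<cdot>\<^sub>v u) = (\<Sum>i<d. u$i * conjugate (w$i + a * u$i))"
    unfolding cprod_sum[OF u wa] using u w by (intro sum.cong) auto
  also have "\<dots> = (\<Sum>i<d. u$i * conjugate (w$i) + conjugate a * (u$i * conjugate (u$i)))"
    by (intro sum.cong refl) (simp add: conjugate_dist_add conjugate_dist_mul distrib_left distrib_right mult_ac)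
  also have "\<dots> = u \<bullet>c w + conjugate a * (u \<bullet>c u)"
    unfolding cprod_sum[OF u u] cprod_sum[OF u w]
    by (simp only: sum.distrib sum_distrib_left)
  finally show ?thesis .
qed

lemma nsq_zero:
  fixes u :: "'a::hermit vec"
  assumes u: "u \<in> carrier_vec d" and z: "nsq u = 0"
  shows "u = 0\<^sub>v d"
proof -
  have "\<forall>i\<in>{..<d}. (norm (u$i))^2 = 0"
    using z u unfolding nsq_def by (subst sum_nonneg_eq_0_iff[symmetric]) auto
  thus ?thesis using u by (intro eq_vecI) auto
qed

lemma cauchy_schwarz:
  fixes u v :: "'a::hermit vec"
  assumes u: "u \<in> carrier_vec d" and v: "v \<in> carrier_vec d"
  shows "(norm (u \<bullet>c v))^2 \<le> nsq u * nsq v"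
proof (cases "nsq u = 0")
  case True
  then have "u = 0\<^sub>v d" using nsq_zero u by blast
  then have "u \<bullet>c v = 0" using v by (simp add: cprod_sum)
  then show ?thesis using True by simp
next
  case False
  then have pos: "nsq u > 0" using nsq_nonneg[of u] by simp
  define a where "a = - conjugate (u \<bullet>c v) * of_real (1 / nsq u)"
  have ca: "conjugate a = - (u \<bullet>c v) * of_real (1 / nsq u)"
    unfolding a_def conjugate_dist_mul conjugate_neg conj_of_real conjugate_id ..
  have z: "u \<bullet>c (v + a \<cdot>\<^sub>v u) = 0"
    unfolding cprod_lin[OF u v] ca cprod_self using pos
    by (simp add: of_real_mult[symmetric] del: of_real_mult)
  have "nsq u * nsq (v + a \<cdot>\<^sub>v u) - (norm (u \<bullet>c (v + a \<cdot>\<^sub>v u)))^2 = nsq u * nsq v - (norm (u \<bullet>c v))^2"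
    by (rule gram[OF u v])
  moreover have "0 \<le> nsq u * nsq (v + a \<cdot>\<^sub>v u)"
    using nsq_nonneg[of u] nsq_nonneg[of "v + a \<cdot>\<^sub>v u"] by simp
  ultimately show ?thesis using z by simp
qed

lemma dP_alt: "u \<in> carrier_vec d \<Longrightarrow> v \<in> carrier_vec d \<Longrightarrow>
  dP (u::'a::hermit vec) v = sqrt (1 - (norm (u \<bullet>c v))\<^sup>2 / (nsq u * nsq v))"
  unfolding dP_def norm_cprod_self ..

lemma dP_nonneg:
  fixes u v :: "'a::hermit vec"
  assumes u: "u \<in> carrier_vec d" and v: "v \<in> carrier_vec d"
  shows "0 \<le> dP u v"
proof -
  have "(norm (u \<bullet>c v))\<^sup>2 / (nsq u * nsq v) \<le> 1"
    using cauchy_schwarz[OF u v] nsq_nonneg[of u] nsq_nonneg[of v]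
    by (cases "nsq u * nsq v = 0") (auto simp: divide_le_eq_1)
  then show ?thesis unfolding dP_alt[OF u v] by simp
qed

lemma adj_index:
  fixes k :: "'a::conjugatable_field mat"
  assumes k: "k \<in> carrier_mat d d" and i: "i < d" and j: "j < d"
  shows "mat_adjoint k $$ (i,j) = conjugate (k $$ (j,i))"
  unfolding mat_adjoint_def using k i j by (simp add: mat_of_rows_index)

lemma adj_carrier:
  fixes k :: "'a::conjugatable_field mat"
  assumes k: "k \<in> carrier_mat d d"
  shows "mat_adjoint k \<in> carrier_mat d d"
  unfolding mat_adjoint_def using k by (auto intro!: mat_of_rows_carrier)

lemma mv_sum:
  assumes k: "k \<in> carrier_mat d d" and u: "u \<in> carrier_vec d" and i: "i < d"
  shows "(k *\<^sub>v u) $ i = (\<Sum>j<d. k $$ (i,j) * u $ j)"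
  using k u i by (auto simp: scalar_prod_def lessThan_atLeast0 intro!: sum.cong)

lemma unitary_inv:
  fixes k :: "'a::hermit mat"
  assumes k: "k \<in> carrier_mat d d" and ad: "mat_adjoint k * k = 1\<^sub>m d"
    and u: "u \<in> carrier_vec d" and v: "v \<in> carrier_vec d"
  shows "(k *\<^sub>v u) \<bullet>c (k *\<^sub>v v) = u \<bullet>c v"
proof -
  have adj: "(\<Sum>i<d. conjugate (k$$(i,l)) * k$$(i,j)) = (if l = j then 1 else 0)"
    if l: "l < d" and j: "j < d" for l j
  proof -
    have "(mat_adjoint k * k) $$ (l,j) = 1\<^sub>m d $$ (l,j)" using ad by simp
    moreover have "(mat_adjoint k * k) $$ (l,j) = (\<Sum>i<d. conjugate (k$$(i,l)) * k$$(i,j))"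
      using k l j adj_carrier[OF k]
      by (auto simp: scalar_prod_def lessThan_atLeast0 adj_index intro!: sum.cong)
    ultimately show ?thesis using l j by simp
  qed
  have ku: "k *\<^sub>v u \<in> carrier_vec d" and kv: "k *\<^sub>v v \<in> carrier_vec d" using k u v by auto
  have "(k *\<^sub>v u) \<bullet>c (k *\<^sub>v v) = (\<Sum>i<d. (\<Sum>j<d. k $$ (i,j) * u $ j) * conjugate (\<Sum>l<d. k $$ (i,l) * v $ l))"
    unfolding cprod_sum[OF ku kv] using k u v by (intro sum.cong refl) (simp only: mv_sum[OF k u] mv_sum[OF k v] lessThan_iff)
  also have "\<dots> = (\<Sum>i<d. \<Sum>j<d. \<Sum>l<d. (k $$ (i,j) * u $ j) * (conjugate (k $$ (i,l)) * conjugate (v $ l)))"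
    by (intro sum.cong refl) (simp add: sum_conjugate conjugate_dist_mul sum_product)
  also have "\<dots> = (\<Sum>j<d. \<Sum>i<d. \<Sum>l<d. (k $$ (i,j) * u $ j) * (conjugate (k $$ (i,l)) * conjugate (v $ l)))"
    by (rule sum.swap)
  also have "\<dots> = (\<Sum>j<d. \<Sum>l<d. \<Sum>i<d. (k $$ (i,j) * u $ j) * (conjugate (k $$ (i,l)) * conjugate (v $ l)))"
    by (rule sum.cong[OF refl], rule sum.swap)
  also have "\<dots> = (\<Sum>j<d. \<Sum>l<d. (u $ j * conjugate (v $ l)) * (\<Sum>i<d. conjugate (k$$(i,l)) * k$$(i,j)))"
    by (intro sum.cong refl) (simp add: sum_distrib_left mult_ac)
  also have "\<dots> = (\<Sum>j<d. \<Sum>l<d. (u $ j * conjugate (v $ l)) * (if l = j then 1 else 0))"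
    by (intro sum.cong refl) (simp add: adj)
  also have "\<dots> = (\<Sum>j<d. u $ j * conjugate (v $ j))"
    by (intro sum.cong refl) (simp add: if_distrib cong: if_cong)
  also have "\<dots> = u \<bullet>c v" using cprod_sum[OF u v] by simp
  finally show ?thesis .
qed

lemma unitary_right:
  fixes k :: "'a::conjugatable_field mat"
  assumes k: "k \<in> carrier_mat d d" and ad: "mat_adjoint k * k = 1\<^sub>m d"
  shows "k * mat_adjoint k = 1\<^sub>m d"
  by (rule mat_mult_left_right_inverse[OF adj_carrier[OF k] k ad])

lemma nsq_unitary:
  fixes k :: "'a::hermit mat"
  assumes k: "k \<in> carrier_mat d d" and ad: "mat_adjoint k * k = 1\<^sub>m d"
    and u: "u \<in> carrier_vec d"
  shows "nsq (k *\<^sub>v u) = nsq u"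
  using unitary_inv[OF k ad u u] by (metis cprod_self of_real_eq_iff)

lemma dP_unitary:
  fixes k :: "'a::hermit mat"
  assumes k: "k \<in> carrier_mat d d" and ad: "mat_adjoint k * k = 1\<^sub>m d"
    and u: "u \<in> carrier_vec d" and v: "v \<in> carrier_vec d"
  shows "dP (k *\<^sub>v u) (k *\<^sub>v v) = dP u v"
  unfolding dP_def unitary_inv[OF k ad u v] unitary_inv[OF k ad u u] unitary_inv[OF k ad v v] ..


lemma split0: "0 < (d::nat) \<Longrightarrow> (\<Sum>i<d. g i) = g 0 + (\<Sum>i<d. if i = 0 then 0 else g i)"
proof -
  assume "0 < d"
  have "(\<Sum>i<d. g i) = (\<Sum>i<d. (if i = 0 then g i else 0) + (if i = 0 then 0 else g i))"
    by (intro sum.cong refl) auto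
  also have "\<dots> = (\<Sum>i<d. (if i = 0 then g i else 0)) + (\<Sum>i<d. if i = 0 then 0 else g i)"
    by (rule sum.distrib)
  also have "(\<Sum>i<d. (if i = 0 then g i else 0)) = (\<Sum>i<d. (if i = 0 then g 0 else 0))"
    by (intro sum.cong refl) auto
  also have "\<dots> = g 0" using \<open>0 < d\<close> by (subst sum.delta) auto
  finally show ?thesis .
qed

lemma sum01:
  fixes f :: "nat \<Rightarrow> real"
  assumes "2 \<le> d" and "\<And>i. 0 \<le> f i"
  shows "f 0 + f 1 \<le> (\<Sum>i<d. f i)"
proof -
  have "(\<Sum>i\<in>{0,1}. f i) \<le> (\<Sum>i<d. f i)"
    using assms by (intro sum_mono2) auto
  then show ?thesis by simp
qed

lemma norm_sq_add_le:
  fixes x y :: "'a::real_normed_vector"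
  shows "(norm (x + y))^2 \<le> 2 * (norm x)^2 + 2 * (norm y)^2"
proof -
  have "norm (x + y) \<le> norm x + norm y" by (rule norm_triangle_ineq)
  then have "(norm (x + y))^2 \<le> (norm x + norm y)^2"
    by (intro power_mono) auto
  also have "\<dots> \<le> 2 * (norm x)^2 + 2 * (norm y)^2"
    by (simp add: power2_eq_square algebra_simps) (metis mult.commute sum_squares_bound add.commute power2_eq_square mult_2)
  finally show ?thesis .
qed

lemma diag_carrier: "diag_real d \<sigma> \<in> carrier_mat d d"
  unfolding diag_real_def by simp

lemma diag_mv:
  assumes v: "(v::'a::real_normed_field vec) \<in> carrier_vec d" and i: "i < d"
  shows "(diag_real d \<sigma> *\<^sub>v v) $ i = of_real (\<sigma> i) * v $ i"
proof -
  have "(diag_real d \<sigma> *\<^sub>v v) $ i = (\<Sum>j<d. diag_real d \<sigma> $$ (i,j) * v $ j)"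
    by (rule mv_sum[OF diag_carrier v i])
  also have "\<dots> = (\<Sum>j<d. if i = j then of_real (\<sigma> i) * v $ j else 0)"
    using i by (intro sum.cong refl) (simp add: diag_real_def)
  also have "\<dots> = of_real (\<sigma> i) * v $ i" using i by (simp add: sum.delta)
  finally show ?thesis .
qed

lemma nsq_carrier: "v \<in> carrier_vec d \<Longrightarrow> nsq v = (\<Sum>i<d. (norm (v$i))^2)"
  unfolding nsq_def by simp

lemma nsq_diag_le:
  fixes v :: "'a::real_normed_field vec"
  assumes v: "v \<in> carrier_vec d" and pos: "\<forall>i<d. 0 < \<sigma> i"
    and mono: "\<forall>i j. i \<le> j \<longrightarrow> j < d \<longrightarrow> \<sigma> j \<le> \<sigma> i"
  shows "nsq (diag_real d \<sigma> *\<^sub>v v) \<le> (\<sigma> 0)^2 * nsq v"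
proof -
  have dv: "diag_real d \<sigma> *\<^sub>v v \<in> carrier_vec d" by (rule mult_mat_vec_carrier[OF diag_carrier v])
  have "nsq (diag_real d \<sigma> *\<^sub>v v) = (\<Sum>i<d. (\<sigma> i)^2 * (norm (v$i))^2)"
    unfolding nsq_carrier[OF dv] using v pos
    by (intro sum.cong refl) (simp add: diag_mv norm_mult power_mult_distrib)
  also have "\<dots> \<le> (\<Sum>i<d. (\<sigma> 0)^2 * (norm (v$i))^2)"
  proof (intro sum_mono mult_right_mono)
    fix i assume "i \<in> {..<d}"
    then have "0 < \<sigma> i" "\<sigma> i \<le> \<sigma> 0" using pos mono by auto
    then show "(\<sigma> i)^2 \<le> (\<sigma> 0)^2" by (intro power_mono) auto
  qed simp
  also have "\<dots> = (\<sigma> 0)^2 * nsq v" unfolding nsq_carrier[OF v] by (simp add: sum_distrib_left)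
  finally show ?thesis .
qed


lemma real_aux1:
  assumes "(w::real) > 0" "P = a + w" "a \<ge> 0"
  shows "1 - w^2 / (P * w) = a / P"
proof -
  have P: "P > 0" using assms by simp
  have "w^2 / (P * w) = w / P" using assms by (simp add: power2_eq_square)
  then show ?thesis using P assms(2) by (simp add: field_simps)
qed

lemma hyper_point:
  fixes X :: "'a::hermit vec"
  assumes d: "2 \<le> d" and X: "X \<in> carrier_vec d" and P: "nsq X > 0"
  shows "\<exists>W\<in>carrier_vec d. W \<noteq> 0\<^sub>v d \<and> W $ 0 = 0 \<and> dP X W = sqrt ((norm (X$0))^2 / nsq X)"
proof -
  define W where "W = vec d (\<lambda>i. if i = 0 then 0 else X$i)"
  have Wc: "W \<in> carrier_vec d" unfolding W_def by simp
  have W0: "W $ 0 = 0" unfolding W_def using d by simp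
  have nX: "nsq X = (norm (X$0))^2 + (\<Sum>i<d. if i = 0 then 0 else (norm (X$i))^2)"
    unfolding nsq_carrier[OF X] using d by (subst split0) auto
  have nW: "nsq W = (\<Sum>i<d. if i = 0 then 0 else (norm (X$i))^2)"
    unfolding nsq_carrier[OF Wc] by (intro sum.cong refl) (auto simp: W_def)
  have XW: "X \<bullet>c W = of_real (nsq W)"
  proof -
    have "X \<bullet>c W = (\<Sum>i<d. W$i * conjugate (W$i))"
      unfolding cprod_sum[OF X Wc] by (intro sum.cong refl) (auto simp: W_def)
    also have "\<dots> = W \<bullet>c W" using cprod_sum[OF Wc Wc] by simp
    finally show ?thesis by (simp add: cprod_self)
  qed
  show ?thesis
  proof (cases "nsq W = 0")
    case False
    then have pW: "nsq W > 0" using nsq_nonneg[of W] by simp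
    have "W \<noteq> 0\<^sub>v d" using False by (auto simp: nsq_def)
    moreover have "dP X W = sqrt ((norm (X$0))^2 / nsq X)"
    proof -
      have "1 - (norm (X \<bullet>c W))\<^sup>2 / (nsq X * nsq W) = (norm (X$0))^2 / nsq X"
        unfolding XW norm_of_real using pW nX nW real_aux1[OF pW, of "nsq X" "(norm (X$0))^2"] nX
        by (simp add: abs_of_nonneg nsq_nonneg)
      then show ?thesis unfolding dP_alt[OF X Wc] by simp
    qed
    ultimately show ?thesis using Wc W0 by blast
  next
    case True
    define E where "E = (unit_vec d 1 :: 'a vec)"
    have Ec: "E \<in> carrier_vec d" unfolding E_def by simp
    have E0: "E $ 0 = 0" unfolding E_def using d by simp
    have E1: "E \<noteq> 0\<^sub>v d"
    proof
      assume "E = 0\<^sub>v d"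
      then have "E $ 1 = 0" using d by simp
      then show False unfolding E_def using d by simp
    qed
    have Wz: "W = 0\<^sub>v d" using nsq_zero[OF Wc True] .
    have X1: "X $ 1 = 0"
    proof -
      have "W $ 1 = 0" using Wz d by simp
      then show ?thesis unfolding W_def using d by simp
    qed
    have XE: "X \<bullet>c E = 0"
      unfolding cprod_sum[OF X Ec] using X1 d by (intro sum.neutral) (auto simp: E_def)
    have "nsq X = (norm (X$0))^2" using nX nW True by simp
    then have "dP X E = sqrt ((norm (X$0))^2 / nsq X)"
      unfolding dP_alt[OF X Ec] XE using P by simp
    then show ?thesis using Ec E0 E1 by blast
  qed
qed



lemma real_aux0:
  fixes D :: real
  assumes a: "0 < D" "D < 1"
  shows "(D/4)/(1/2 - D/4) < D"
proof -
  have ne: "1/2 - D/4 \<noteq> 0" "2 - D \<noteq> 0" using a by auto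
  have "(D/4)/(1/2 - D/4) = D/(2 - D)" using ne by (simp add: field_simps)
  also have "\<dots> < D"
  proof -
    have "D * 1 < D * (2 - D)" using a by (intro mult_strict_left_mono) auto
    then show ?thesis using a by (simp add: divide_less_eq)
  qed
  finally show ?thesis .
qed

lemma real_aux2:
  fixes P nY N2 s \<delta> :: real
  assumes P: "P > 0" and nY: "nY \<ge> P/2 - s^2 * P" and G: "P * nY - N2 \<le> P * (s^2 * P)"
    and s: "s = \<delta>/2" and \<delta>: "0 < \<delta>" "\<delta> < 1"
  shows "1 - N2 / (P * nY) < \<delta>^2"
proof -
  have d2: "\<delta>^2 < 1" using \<delta> by (simp add: power_less_one_iff)
  have s2': "s^2 = \<delta>^2/4" unfolding s by (simp add: power_divide)
  have s2: "s^2 < 1/4" using d2 s2' by linarith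
  have h: "1/2 - s^2 > 1/4" using s2 by simp
  have nYp: "nY \<ge> P * (1/2 - s^2)" using nY by (simp add: algebra_simps)
  have "P * (1/2 - s^2) > 0" using P h by (intro mult_pos_pos) auto
  then have nYpos: "nY > 0" using nYp by linarith
  have PnY: "P * nY > 0" using P nYpos by simp
  have "1 - N2 / (P * nY) = (P * nY - N2) / (P * nY)" using P nYpos by (simp add: diff_divide_distrib)
  also have "\<dots> \<le> (P * (s^2 * P)) / (P * nY)" using G PnY by (intro divide_right_mono) auto
  also have "\<dots> = s^2 * P / nY" using P by simp
  also have "\<dots> \<le> s^2 * P / (P * (1/2 - s^2))"
  proof (rule divide_left_mono[OF nYp])
    show "0 \<le> s^2 * P" using P by simp
    show "0 < nY * (P * (1/2 - s^2))" using nYpos \<open>P * (1/2 - s^2) > 0\<close> by (rule mult_pos_pos)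
  qed
  also have "\<dots> = s^2 / (1/2 - s^2)" using P by simp
  also have "\<dots> < \<delta>^2"
    unfolding s2' using \<delta> by (intro real_aux0[OF _ d2]) simp
  finally show ?thesis .
qed

lemma real_aux3:
  fixes nU nV N2 G A P c s \<delta> r \<sigma>0 \<sigma>1 :: real
  assumes G: "G = nU * nV - N2" and N2: "N2 \<ge> 0" and Gl: "G \<ge> \<sigma>1^2 * c^2 * (\<sigma>0^2 * A)"
    and A: "A > 0" and P: "P > 0" and c: "c^2 = s^2 * P" and cpos: "c > 0"
    and nU: "0 \<le> nU" "nU \<le> \<sigma>0^2 * P" and nV: "0 \<le> nV" "nV \<le> \<sigma>0^2 * (2 * P + 2 * c^2)"
    and sr: "sqrt (1 - N2 / (nU * nV)) < r"
    and s: "s = \<delta>/2" and \<delta>: "0 < \<delta>" "\<delta> < 1" and r: "0 < r"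
    and \<sigma>: "\<sigma>0 > 0" "\<sigma>1 > 0"
  shows "\<delta>/(4*r) * sqrt (A / P) \<le> \<sigma>0 / \<sigma>1"
proof -
  have g0: "\<sigma>1^2 * c^2 * (\<sigma>0^2 * A) > 0" using \<sigma> cpos A by simp
  have Gpos: "G > 0" using g0 Gl by linarith
  have NN: "nU * nV \<ge> G" using G N2 by linarith
  have NNpos: "nU * nV > 0" using NN Gpos by linarith
  define E where "E = 1 - N2 / (nU * nV)"
  have nz1: "nU \<noteq> 0" and nz2: "nV \<noteq> 0" using NNpos by auto
  have EG: "E = G / (nU * nV)" unfolding E_def G using nz1 nz2 by (simp add: diff_divide_distrib)
  have E0: "E \<ge> 0" unfolding EG using Gpos NNpos by simp
  have Er: "E < r^2"
  proof -
    have "sqrt E < r" using sr unfolding E_def .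
    then have "(sqrt E)^2 < r^2" using E0 by (intro power_strict_mono) auto
    then show ?thesis using E0 by simp
  qed
  define Z where "Z = (\<sigma>0^2 * P) * (\<sigma>0^2 * (2 * P + 2 * c^2))"
  have Zpos: "Z > 0" unfolding Z_def using \<sigma> P cpos by (intro mult_pos_pos add_pos_pos) auto
  have NZ: "nU * nV \<le> Z" unfolding Z_def using nU nV by (intro mult_mono) auto
  have "\<sigma>1^2 * c^2 * (\<sigma>0^2 * A) / Z \<le> G / (nU * nV)"
    using g0 Gl NNpos NZ by (intro frac_le) auto
  then have "\<sigma>1^2 * c^2 * (\<sigma>0^2 * A) / Z < r^2" using Er EG by simp
  then have k1: "\<sigma>1^2 * c^2 * (\<sigma>0^2 * A) < r^2 * Z" using Zpos by (simp add: divide_less_eq)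
  have d2: "\<delta>^2 < 1" using \<delta> by (simp add: power_less_one_iff)
  have s2: "s^2 = \<delta>^2 / 4" unfolding s by (simp add: power_divide)
  have k2: "\<sigma>1^2 * (s^2 * P) * (\<sigma>0^2 * A) < r^2 * ((\<sigma>0^2 * P) * (\<sigma>0^2 * (2 * P + 2 * (s^2 * P))))"
    using k1 unfolding Z_def c .
  have k3: "(\<sigma>0^2 * P) * (\<sigma>1^2 * s^2 * A) < (\<sigma>0^2 * P) * (r^2 * \<sigma>0^2 * P * (2 + 2 * s^2))"
    using k2 by (simp add: algebra_simps)
  have k4: "\<sigma>1^2 * s^2 * A < r^2 * \<sigma>0^2 * P * (2 + 2 * s^2)"
    using k3 \<sigma> P by (simp add: mult_less_cancel_left_pos)
  have k5: "r^2 * \<sigma>0^2 * P * (2 + 2 * s^2) \<le> r^2 * \<sigma>0^2 * P * 4"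
    using s2 d2 \<sigma> P by (intro mult_left_mono) auto
  have k6: "\<sigma>1^2 * \<delta>^2 * A \<le> 16 * r^2 * \<sigma>0^2 * P"
    using k4 k5 s2 by simp
  have lhs0: "0 \<le> \<sigma>0 / \<sigma>1" using \<sigma> by simp
  have "(\<delta>/(4*r) * sqrt (A / P))^2 = \<delta>^2 * A / (16 * r^2 * P)"
    using A P r by (simp add: power_mult_distrib power_divide)
  also have "\<dots> \<le> \<sigma>0^2 / \<sigma>1^2"
    using k6 \<sigma> r P by (simp add: divide_simps mult_ac)
  also have "\<dots> = (\<sigma>0 / \<sigma>1)^2" by (simp add: power_divide)
  finally show ?thesis using lhs0 by (rule power2_le_imp_le)
qed



lemma norm_sq_sub_le:
  fixes x y :: "'a::real_normed_vector"
  shows "(norm x)^2 / 2 - (norm y)^2 \<le> (norm (x + y))^2"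
proof -
  have "(norm ((x + y) + (- y)))^2 \<le> 2 * (norm (x + y))^2 + 2 * (norm (- y))^2"
    by (rule norm_sq_add_le)
  then show ?thesis by simp
qed

lemma main_ineq:
  fixes X :: "'a::hermit vec"
  assumes d: "2 \<le> d" and X: "X \<in> carrier_vec d" and P: "nsq X > 0"
    and pos: "\<forall>i<d. 0 < \<sigma> i" and mono: "\<forall>i j. i \<le> j \<longrightarrow> j < d \<longrightarrow> \<sigma> j \<le> \<sigma> i"
    and \<delta>: "0 < \<delta>" "\<delta> < 1" and r: "0 < r"
    and H: "\<And>Y. Y \<in> carrier_vec d \<Longrightarrow> Y \<noteq> 0\<^sub>v d \<Longrightarrow> dP X Y < \<delta> \<Longrightarrow>
              dP (diag_real d \<sigma> *\<^sub>v X) (diag_real d \<sigma> *\<^sub>v Y) < r"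
  shows "\<delta>/(4*r) * sqrt ((norm (X$0))^2 / nsq X) \<le> \<sigma> 0 / \<sigma> 1"
proof -
  have s0: "\<sigma> 0 > 0" and s1: "\<sigma> 1 > 0" using pos d by auto
  show ?thesis
proof (cases "norm (X$0) = 0")
  case True
  then show ?thesis using s0 s1 by simp
next
  case False
  define A where "A = (norm (X$0))^2"
  have A: "A > 0" using False unfolding A_def by simp
  define P' where "P' = nsq X"
  define s where "s = \<delta>/2"
  define c where "c = s * sqrt P'"
  have cpos: "c > 0" unfolding c_def s_def P'_def using \<delta> P by simp
  have c2: "c^2 = s^2 * P'" unfolding c_def using P unfolding P'_def by (simp add: power_mult_distrib)
  define D where "D = (diag_real d \<sigma> :: 'a mat)"
  have Dc: "D \<in> carrier_mat d d" unfolding D_def by (rule diag_carrier)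
  define w where "w = (of_real c :: 'a) \<cdot>\<^sub>v unit_vec d 1"
  have wc: "w \<in> carrier_vec d" unfolding w_def by simp
  have wi: "w $ i = (if i = 1 then of_real c else 0)" if "i < d" for i
    unfolding w_def using that d by simp
  define Y where "Y = w + 1 \<cdot>\<^sub>v X"
  have Yc: "Y \<in> carrier_vec d" unfolding Y_def using wc X by simp
  have Yi: "Y $ i = X $ i + (if i = 1 then of_real c else 0)" if "i < d" for i
    unfolding Y_def using that wc X wi by simp
  have nw: "nsq w = c^2"
  proof -
    have "nsq w = (\<Sum>i<d. if i = 1 then c^2 else 0)"
      unfolding nsq_carrier[OF wc] by (intro sum.cong refl) (simp add: wi)
    also have "\<dots> = c^2" using d by (simp add: sum.delta)
    finally show ?thesis .
  qed
  have nYl: "nsq Y \<ge> P'/2 - c^2"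
  proof -
    have "(\<Sum>i<d. (norm (X$i))^2 / 2 - (if i = 1 then c^2 else 0)) \<le> (\<Sum>i<d. (norm (Y$i))^2)"
    proof (rule sum_mono)
      fix i assume i: "i \<in> {..<d}"
      have "(norm (X$i))^2 / 2 - (norm (if i = 1 then (of_real c :: 'a) else 0))^2 \<le> (norm (X$i + (if i = 1 then of_real c else 0)))^2"
        by (rule norm_sq_sub_le)
      then show "(norm (X$i))^2 / 2 - (if i = 1 then c^2 else 0) \<le> (norm (Y$i))^2"
        using i Yi cpos by (auto split: if_splits)
    qed
    also have "\<dots> = nsq Y" using nsq_carrier[OF Yc] by simp
    finally show ?thesis
      unfolding P'_def nsq_carrier[OF X] using d by (simp add: sum_subtractf sum_divide_distrib sum.delta)
  qed
  have nYu: "nsq Y \<le> 2 * P' + 2 * c^2"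
  proof -
    have "(\<Sum>i<d. (norm (Y$i))^2) \<le> (\<Sum>i<d. 2 * (norm (X$i))^2 + (if i = 1 then 2 * c^2 else 0))"
    proof (rule sum_mono)
      fix i assume i: "i \<in> {..<d}"
      have "(norm (X$i + (if i = 1 then (of_real c :: 'a) else 0)))^2 \<le> 2 * (norm (X$i))^2 + 2 * (norm (if i = 1 then (of_real c :: 'a) else 0))^2"
        by (rule norm_sq_add_le)
      then show "(norm (Y$i))^2 \<le> 2 * (norm (X$i))^2 + (if i = 1 then 2 * c^2 else 0)"
        using i Yi cpos by (auto split: if_splits)
    qed
    then show ?thesis
      unfolding P'_def nsq_carrier[OF X] nsq_carrier[OF Yc] using d
      by (simp add: sum.distrib sum_distrib_left sum.delta)
  qed
  have Ppos: "P' > 0" unfolding P'_def by (rule P)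
  have YwX: "Y = w + 1 \<cdot>\<^sub>v X" unfolding Y_def ..
  have GX: "P' * nsq Y - (norm (X \<bullet>c Y))^2 = P' * nsq w - (norm (X \<bullet>c w))^2"
    unfolding P'_def YwX by (rule gram[OF X wc])
  have GX2: "P' * nsq Y - (norm (X \<bullet>c Y))^2 \<le> P' * (s^2 * P')"
    using GX nw c2 by simp
  have s2: "s^2 < 1/4"
  proof -
    have "\<delta>^2 < 1" using \<delta> by (simp add: power_less_one_iff)
    moreover have "s^2 = \<delta>^2/4" unfolding s_def by (simp add: power_divide)
    ultimately show ?thesis by linarith
  qed
  have nYl2: "nsq Y \<ge> P'/2 - s^2 * P'" using nYl c2 by simp
  have nYpos: "nsq Y > 0"
  proof -
    have "P' * (1/2 - s^2) > 0" using Ppos s2 by (intro mult_pos_pos) auto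
    then show ?thesis using nYl2 by (simp add: algebra_simps)
  qed
  have Ynz: "Y \<noteq> 0\<^sub>v d"
  proof
    assume "Y = 0\<^sub>v d"
    then have "nsq Y = 0" by (simp add: nsq_def)
    then show False using nYpos by simp
  qed
  have "1 - (norm (X \<bullet>c Y))^2 / (P' * nsq Y) < \<delta>^2"
    by (rule real_aux2[OF Ppos nYl2 GX2 s_def \<delta>])
  then have "sqrt (1 - (norm (X \<bullet>c Y))^2 / (P' * nsq Y)) < sqrt (\<delta>^2)"
    by (rule real_sqrt_less_mono)
  then have dXY: "dP X Y < \<delta>" unfolding dP_alt[OF X Yc] P'_def using \<delta> by simp
  have dUV: "dP (D *\<^sub>v X) (D *\<^sub>v Y) < r" unfolding D_def by (rule H[OF Yc Ynz dXY])
  define U where "U = D *\<^sub>v X"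
  define w2 where "w2 = D *\<^sub>v w"
  have Uc: "U \<in> carrier_vec d" unfolding U_def using Dc X by simp
  have w2c: "w2 \<in> carrier_vec d" unfolding w2_def using Dc wc by simp
  have Ui: "U $ i = of_real (\<sigma> i) * X $ i" if "i < d" for i
    unfolding U_def D_def using X that by (rule diag_mv)
  have w2i: "w2 $ i = (if i = 1 then of_real (\<sigma> 1 * c) else 0)" if "i < d" for i
    unfolding w2_def D_def using diag_mv[OF wc that] wi[OF that] by simp
  have VwU: "D *\<^sub>v Y = w2 + 1 \<cdot>\<^sub>v U"
  proof (rule eq_vecI)
    fix i assume "i < dim_vec (w2 + 1 \<cdot>\<^sub>v U)"
    then have i: "i < d" using w2c Uc by simp
    have "(D *\<^sub>v Y) $ i = of_real (\<sigma> i) * Y $ i" unfolding D_def using Yc i by (rule diag_mv)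
    also have "\<dots> = w2 $ i + U $ i" unfolding Yi[OF i] w2i[OF i] Ui[OF i]
      by (simp add: distrib_left)
    finally show "(D *\<^sub>v Y) $ i = (w2 + 1 \<cdot>\<^sub>v U) $ i" using i w2c Uc by simp
  qed (use Dc w2c Uc in simp)
  have nw2: "nsq w2 = (\<sigma> 1 * c)^2"
  proof -
    have "nsq w2 = (\<Sum>i<d. if i = 1 then (\<sigma> 1 * c)^2 else 0)"
      unfolding nsq_carrier[OF w2c] using s1 cpos by (intro sum.cong refl) (simp add: w2i norm_mult abs_of_pos)
    also have "\<dots> = (\<sigma> 1 * c)^2" using d by (simp add: sum.delta)
    finally show ?thesis .
  qed
  have Uw2: "U \<bullet>c w2 = U $ 1 * of_real (\<sigma> 1 * c)"
  proof -
    have "U \<bullet>c w2 = (\<Sum>i<d. if i = 1 then U $ 1 * of_real (\<sigma> 1 * c) else 0)"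
      unfolding cprod_sum[OF Uc w2c] by (intro sum.cong refl) (simp add: w2i conj_of_real del: of_real_mult)
    also have "\<dots> = U $ 1 * of_real (\<sigma> 1 * c)" using d by (simp add: sum.delta)
    finally show ?thesis .
  qed
  have GU: "nsq U * nsq (D *\<^sub>v Y) - (norm (U \<bullet>c (D *\<^sub>v Y)))^2
      = (\<sigma> 1 * c)^2 * (nsq U - (norm (U $ 1))^2)"
    unfolding VwU gram[OF Uc w2c] nw2 Uw2 norm_mult norm_of_real
    by (simp add: algebra_simps power_mult_distrib)
  have U01: "(norm (U $ 0))^2 + (norm (U $ 1))^2 \<le> nsq U"
    unfolding nsq_carrier[OF Uc] by (rule sum01[OF d]) simp
  have U0: "(norm (U $ 0))^2 = (\<sigma> 0)^2 * A"
  proof -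
    have "U $ 0 = of_real (\<sigma> 0) * X $ 0" using Ui[of 0] d by simp
    then show ?thesis unfolding A_def using s0 by (simp add: norm_mult power_mult_distrib)
  qed
  have Gl: "nsq U * nsq (D *\<^sub>v Y) - (norm (U \<bullet>c (D *\<^sub>v Y)))^2 \<ge> (\<sigma> 1)^2 * c^2 * ((\<sigma> 0)^2 * A)"
  proof -
    have "(\<sigma> 1 * c)^2 * ((\<sigma> 0)^2 * A) \<le> (\<sigma> 1 * c)^2 * (nsq U - (norm (U $ 1))^2)"
      using U01 U0 by (intro mult_left_mono) auto
    then show ?thesis unfolding GU by (simp add: power_mult_distrib)
  qed
  have nU: "nsq U \<le> (\<sigma> 0)^2 * P'"
    unfolding U_def D_def P'_def by (rule nsq_diag_le[OF X pos mono])
  have nV: "nsq (D *\<^sub>v Y) \<le> (\<sigma> 0)^2 * (2 * P' + 2 * c^2)"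
  proof -
    have "nsq (D *\<^sub>v Y) \<le> (\<sigma> 0)^2 * nsq Y"
      unfolding D_def by (rule nsq_diag_le[OF Yc pos mono])
    also have "\<dots> \<le> (\<sigma> 0)^2 * (2 * P' + 2 * c^2)"
      using nYu by (intro mult_left_mono) auto
    finally show ?thesis .
  qed
  have sr: "sqrt (1 - (norm (U \<bullet>c (D *\<^sub>v Y)))^2 / (nsq U * nsq (D *\<^sub>v Y))) < r"
    using dUV dP_alt[OF Uc mult_mat_vec_carrier[OF Dc Yc]] unfolding U_def by simp
  have "\<delta>/(4*r) * sqrt (A / P') \<le> \<sigma> 0 / \<sigma> 1"
    by (rule real_aux3[OF refl _ Gl A Ppos c2 cpos nsq_nonneg nU nsq_nonneg nV sr s_def \<delta> r s0 s1]) simp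
  then show ?thesis unfolding A_def P'_def .
qed
qed


lemma mv_zero:
  fixes A :: "'a::comm_ring_1 mat"
  assumes A: "A \<in> carrier_mat d d"
  shows "A *\<^sub>v 0\<^sub>v d = 0\<^sub>v d"
proof (rule eq_vecI)
  fix i assume "i < dim_vec (0\<^sub>v d :: 'a vec)"
  then have i: "i < d" by simp
  show "(A *\<^sub>v 0\<^sub>v d) $ i = 0\<^sub>v d $ i" using mv_sum[OF A zero_carrier_vec i] i by simp
qed (use A in simp)

lemma generic:
  fixes g k k' :: "'a::hermit mat" and x :: "'a vec"
  assumes d: "2 \<le> d" and gc: "g \<in> carrier_mat d d"
    and uk: "unitary_mat d k" and uk': "unitary_mat d k'"
    and pos: "\<forall>i<d. 0 < \<sigma> i" and mono: "\<forall>i j. i \<le> j \<longrightarrow> j < d \<longrightarrow> \<sigma> j \<le> \<sigma> i"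
    and gdef: "g = k * diag_real d \<sigma> * k'"
    and x: "x \<in> proj_reps d" and \<delta>: "0 < \<delta>" "\<delta> < 1" and r: "0 < r" "r < 1"
    and ball: "\<forall>y \<in> proj_ball d x \<delta>. dP (g *\<^sub>v x) (g *\<^sub>v y) < r"
  shows "\<sigma> 0 / \<sigma> 1 \<ge> \<delta> / (4 * r) * dist_to_set x (hyperplane_reps d k')"
proof -
  have kc: "k \<in> carrier_mat d d" and ak: "mat_adjoint k * k = 1\<^sub>m d"
    using uk unfolding unitary_mat_def by auto
  have k'c: "k' \<in> carrier_mat d d" and ak': "mat_adjoint k' * k' = 1\<^sub>m d"
    using uk' unfolding unitary_mat_def by auto
  have kk': "k' * mat_adjoint k' = 1\<^sub>m d" by (rule unitary_right[OF k'c ak'])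
  have adjc: "mat_adjoint k' \<in> carrier_mat d d" by (rule adj_carrier[OF k'c])
  define D where "D = (diag_real d \<sigma> :: 'a mat)"
  have Dc: "D \<in> carrier_mat d d" unfolding D_def by (rule diag_carrier)
  have xc: "x \<in> carrier_vec d" and xnz: "x \<noteq> 0\<^sub>v d" using x unfolding proj_reps_def by auto
  have gv: "g *\<^sub>v v = k *\<^sub>v (D *\<^sub>v (k' *\<^sub>v v))" if v: "v \<in> carrier_vec d" for v
  proof -
    have gD: "g = k * D * k'" unfolding gdef D_def ..
    have "g *\<^sub>v v = (k * D) *\<^sub>v (k' *\<^sub>v v)" unfolding gD
      by (rule assoc_mult_mat_vec[of _ d d _ d]) (use kc Dc k'c v in auto)
    also have "\<dots> = k *\<^sub>v (D *\<^sub>v (k' *\<^sub>v v))"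
      by (rule assoc_mult_mat_vec[of _ d d _ d]) (use kc Dc k'c v in auto)
    finally show ?thesis .
  qed
  have kback: "k' *\<^sub>v (mat_adjoint k' *\<^sub>v v) = v" if v: "v \<in> carrier_vec d" for v
  proof -
    have "k' *\<^sub>v (mat_adjoint k' *\<^sub>v v) = (k' * mat_adjoint k') *\<^sub>v v"
      by (rule assoc_mult_mat_vec[of _ d d _ d, symmetric]) (use k'c adjc v in auto)
    then show ?thesis using kk' v by simp
  qed
  define X where "X = k' *\<^sub>v x"
  have Xc: "X \<in> carrier_vec d" unfolding X_def using k'c xc by simp
  have nX: "nsq X = nsq x" unfolding X_def by (rule nsq_unitary[OF k'c ak' xc])
  have Ppos: "nsq X > 0"
  proof -
    have "nsq x \<noteq> 0" using nsq_zero[OF xc] xnz by blast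
    then show ?thesis using nX nsq_nonneg[of x] by simp
  qed
  have H: "dP (diag_real d \<sigma> *\<^sub>v X) (diag_real d \<sigma> *\<^sub>v Y) < r"
    if Yc: "Y \<in> carrier_vec d" and Ynz: "Y \<noteq> 0\<^sub>v d" and dXY: "dP X Y < \<delta>" for Y
  proof -
    define y where "y = mat_adjoint k' *\<^sub>v Y"
    have yc: "y \<in> carrier_vec d" unfolding y_def using adjc Yc by simp
    have ky: "k' *\<^sub>v y = Y" unfolding y_def by (rule kback[OF Yc])
    have ynz: "y \<noteq> 0\<^sub>v d"
    proof
      assume "y = 0\<^sub>v d"
      then have "k' *\<^sub>v y = 0\<^sub>v d" using mv_zero[OF k'c] by simp
      then show False using ky Ynz by simp
    qed
    have "dP x y = dP X Y" unfolding X_def ky[symmetric] by (rule dP_unitary[OF k'c ak' xc yc, symmetric])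
    then have "y \<in> proj_ball d x \<delta>" unfolding proj_ball_def proj_reps_def using yc ynz dXY by simp
    then have "dP (g *\<^sub>v x) (g *\<^sub>v y) < r" using ball by blast
    moreover have "dP (g *\<^sub>v x) (g *\<^sub>v y) = dP (D *\<^sub>v X) (D *\<^sub>v Y)"
      unfolding gv[OF xc] gv[OF yc] ky X_def[symmetric]
      using Dc Xc Yc by (intro dP_unitary[OF kc ak]) auto
    ultimately show ?thesis unfolding D_def by simp
  qed
  have M: "\<delta>/(4*r) * sqrt ((norm (X$0))^2 / nsq X) \<le> \<sigma> 0 / \<sigma> 1"
    by (rule main_ineq[OF d Xc Ppos pos mono \<delta> r(1) H])
  obtain W :: "'a vec" where Wc: "W \<in> carrier_vec d" and Wnz: "W \<noteq> 0\<^sub>v d" and W0: "W $ 0 = 0"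
    and dW: "dP X W = sqrt ((norm (X$0))^2 / nsq X)"
    using hyper_point[OF d Xc Ppos] by blast
  define w where "w = mat_adjoint k' *\<^sub>v W"
  have wc: "w \<in> carrier_vec d" unfolding w_def using adjc Wc by simp
  have kw: "k' *\<^sub>v w = W" unfolding w_def by (rule kback[OF Wc])
  have wnz: "w \<noteq> 0\<^sub>v d"
  proof
    assume "w = 0\<^sub>v d"
    then have "k' *\<^sub>v w = 0\<^sub>v d" using mv_zero[OF k'c] by simp
    then show False using kw Wnz by simp
  qed
  have We: "W \<bullet>c unit_vec d 0 = 0"
    unfolding cprod_sum[OF Wc unit_vec_carrier] using W0 d by (intro sum.neutral) auto
  have wH: "w \<in> hyperplane_reps d k'"
    unfolding hyperplane_reps_def proj_reps_def using wc wnz kw We by simp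
  have dxw: "dP x w = dP X W" unfolding X_def kw[symmetric] by (rule dP_unitary[OF k'c ak' xc wc, symmetric])
  have bdd: "bdd_below (dP x ` hyperplane_reps d k')"
  proof (rule bdd_belowI[of _ 0])
    fix z assume "z \<in> dP x ` hyperplane_reps d k'"
    then obtain v where "v \<in> hyperplane_reps d k'" "z = dP x v" by blast
    then show "0 \<le> z" using dP_nonneg[OF xc] unfolding hyperplane_reps_def proj_reps_def by auto
  qed
  have "dist_to_set x (hyperplane_reps d k') \<le> dP x w"
    unfolding dist_to_set_def using bdd wH by (intro cInf_lower) auto
  then have "\<delta> / (4 * r) * dist_to_set x (hyperplane_reps d k') \<le> \<delta> / (4 * r) * dP x w"
    using \<delta> r by (intro mult_left_mono) auto
  also have "\<dots> \<le> \<sigma> 0 / \<sigma> 1" using M dxw dW by simp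
  finally show ?thesis .
qed

theorem lemma2p2:
  shows
  "(\<forall>(d::nat) (g::real mat) (k::real mat) (k'::real mat) (\<sigma>::nat \<Rightarrow> real) (x::real vec) (\<delta>::real) (r::real).
      2 \<le> d \<longrightarrow> g \<in> carrier_mat d d \<longrightarrow>
      unitary_mat d k \<longrightarrow> unitary_mat d k' \<longrightarrow>
      (\<forall>i<d. 0 < \<sigma> i) \<longrightarrow> (\<forall>i j. i \<le> j \<longrightarrow> j < d \<longrightarrow> \<sigma> j \<le> \<sigma> i) \<longrightarrow>
      g = k * diag_real d \<sigma> * k' \<longrightarrow>
      x \<in> proj_reps d \<longrightarrow> 0 < \<delta> \<longrightarrow> \<delta> < 1 \<longrightarrow> 0 < r \<longrightarrow> r < 1 \<longrightarrow>
      (\<forall>y \<in> proj_ball d x \<delta>. dP (g *\<^sub>v x) (g *\<^sub>v y) < r) \<longrightarrow>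
      \<sigma> 0 / \<sigma> 1 \<ge> \<delta> / (4 * r) * dist_to_set x (hyperplane_reps d k'))
   \<and>
   (\<forall>(d::nat) (g::complex mat) (k::complex mat) (k'::complex mat) (\<sigma>::nat \<Rightarrow> real) (x::complex vec) (\<delta>::real) (r::real).
      2 \<le> d \<longrightarrow> g \<in> carrier_mat d d \<longrightarrow>
      unitary_mat d k \<longrightarrow> unitary_mat d k' \<longrightarrow>
      (\<forall>i<d. 0 < \<sigma> i) \<longrightarrow> (\<forall>i j. i \<le> j \<longrightarrow> j < d \<longrightarrow> \<sigma> j \<le> \<sigma> i) \<longrightarrow>
      g = k * diag_real d \<sigma> * k' \<longrightarrow>
      x \<in> proj_reps d \<longrightarrow> 0 < \<delta> \<longrightarrow> \<delta> < 1 \<longrightarrow> 0 < r \<longrightarrow> r < 1 \<longrightarrow>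
      (\<forall>y \<in> proj_ball d x \<delta>. dP (g *\<^sub>v x) (g *\<^sub>v y) < r) \<longrightarrow>
      \<sigma> 0 / \<sigma> 1 \<ge> \<delta> / (4 * r) * dist_to_set x (hyperplane_reps d k'))"
proof (intro conjI allI impI)
  fix d :: nat and g k k' :: "real mat" and \<sigma> :: "nat \<Rightarrow> real" and x :: "real vec" and \<delta> r :: real
  assume a: "2 \<le> d" "g \<in> carrier_mat d d" "unitary_mat d k" "unitary_mat d k'"
    "\<forall>i<d. 0 < \<sigma> i" "\<forall>i j. i \<le> j \<longrightarrow> j < d \<longrightarrow> \<sigma> j \<le> \<sigma> i"
    "g = k * diag_real d \<sigma> * k'" "x \<in> proj_reps d" "0 < \<delta>" "\<delta> < 1" "0 < r" "r < 1"
    "\<forall>y \<in> proj_ball d x \<delta>. dP (g *\<^sub>v x) (g *\<^sub>v y) < r"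
  show "\<sigma> 0 / \<sigma> 1 \<ge> \<delta> / (4 * r) * dist_to_set x (hyperplane_reps d k')"
    by (rule generic[OF a])
next
  fix d :: nat and g k k' :: "complex mat" and \<sigma> :: "nat \<Rightarrow> real" and x :: "complex vec" and \<delta> r :: real
  assume a: "2 \<le> d" "g \<in> carrier_mat d d" "unitary_mat d k" "unitary_mat d k'"
    "\<forall>i<d. 0 < \<sigma> i" "\<forall>i j. i \<le> j \<longrightarrow> j < d \<longrightarrow> \<sigma> j \<le> \<sigma> i"
    "g = k * diag_real d \<sigma> * k'" "x \<in> proj_reps d" "0 < \<delta>" "\<delta> < 1" "0 < r" "r < 1"
    "\<forall>y \<in> proj_ball d x \<delta>. dP (g *\<^sub>v x) (g *\<^sub>v y) < r"
  show "\<sigma> 0 / \<sigma> 1 \<ge> \<delta> / (4 * r) * dist_to_set x (hyperplane_reps d k')"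
    by (rule generic[OF a])
qed

end
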